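(* Let $P,Q$ be nonzero coprime integers with $\Delta:=P^2-4Q\neq0$, such that $\alpha/\beta$ is not a root of unity, where $\alpha,\beta$ are the roots of $x^2-Px+Q$. Let $(U_n)$ be the Lucas sequence $U_n=(\alpha^n-\beta^n)/(\alpha-\beta)$. Let $n,k$ be positive integers with $n\ge k$. Then the number \[\left\{{n\atop k}\right\}_{\boldsymbol U}:=\frac{\mathrm{lcm}(U_n,U_{n-1},\dots,U_{n-k+1})}{\mathrm{lcm}(U_1,U_2,\dots,U_k)}\] is a positive integer, and it divides $\binom{n}{k}_{\boldsymbol U}$.
   Context: $U_0=0$, $U_1=1$, $U_{n+2}=PU_{n+1}-QU_n$. For $n\ge k\ge1$, $\binom{n}{k}_{\boldsymbol U}:=\frac{U_nU_{n-1}\cdots U_{n-k+1}}{U_1U_2\cdots U_k}$. *)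

theory Defs
  imports Complex_Main
begin

fun lucasU :: "int \<Rightarrow> int \<Rightarrow> nat \<Rightarrow> int" where
  "lucasU P Q 0 = 0"
| "lucasU P Q (Suc 0) = 1"
| "lucasU P Q (Suc (Suc n)) = P * lucasU P Q (Suc n) - Q * lucasU P Q n"

definition lucas_binom :: "int \<Rightarrow> int \<Rightarrow> nat \<Rightarrow> nat \<Rightarrow> rat" where
  "lucas_binom P Q n k =
     (\<Prod>i\<in>{n-k+1..n}. of_int (lucasU P Q i)) / (\<Prod>i\<in>{1..k}. of_int (lucasU P Q i))"

definition lucas_lcm_binom :: "int \<Rightarrow> int \<Rightarrow> nat \<Rightarrow> nat \<Rightarrow> rat" where
  "lucas_lcm_binom P Q n k =
     of_int (Lcm (lucasU P Q ` {n-k+1..n})) / of_int (Lcm (lucasU P Q ` {1..k}))"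

end

theory Submission
  imports Defs "HOL-Computational_Algebra.Primes"
begin

lemma lucas_add_pair:
  "lucasU P Q (m+n+1) = lucasU P Q (m+1) * lucasU P Q (n+1) - Q * lucasU P Q m * lucasU P Q n
   \<and> lucasU P Q (m+n+2) = lucasU P Q (m+2) * lucasU P Q (n+1) - Q * lucasU P Q (m+1) * lucasU P Q n"
proof (induction m)
  case 0
  then show ?case by (simp add: numeral_2_eq_2)
next
  case (Suc m)
  let ?u = "lucasU P Q"
  have h1: "?u (m+n+1) = ?u (m+1) * ?u (n+1) - Q * ?u m * ?u n"
   and h2: "?u (m+n+2) = ?u (m+2) * ?u (n+1) - Q * ?u (m+1) * ?u n" using Suc by auto
  have e1: "?u (m+n+3) = P * ?u (m+n+2) - Q * ?u (m+n+1)"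
    by (simp add: numeral_3_eq_3 numeral_2_eq_2)
  have e3: "?u (m + 2) = P * ?u (m+1) - Q * ?u m"
    by (simp add: numeral_2_eq_2)
  have e2: "?u (m + 3) = P * ?u (m+2) - Q * ?u (m+1)"
    by (simp add: numeral_3_eq_3 numeral_2_eq_2)
  have H3: "?u (m+n+3) = ?u (m+3) * ?u (n+1) - Q * ?u (m+2) * ?u n"
    by (simp only: e1 e2 e3 h1 h2) (simp del: lucasU.simps add: algebra_simps)
  have i: "Suc m + n + 2 = m+n+3" "Suc m + 2 = m + 3" "Suc m + n + 1 = m+n+2" "Suc m + 1 = m+2" by auto
  show ?case unfolding i using h2 H3 by (simp only: Suc_eq_plus1)
qed

lemma lucas_add:
  "lucasU P Q (m+n+1) = lucasU P Q (m+1) * lucasU P Q (n+1) - Q * lucasU P Q m * lucasU P Q n"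
  using lucas_add_pair by blast

lemma lucas_binet_pair:
  fixes a b :: complex
  assumes "a + b = of_int P" "a * b = of_int Q"
  shows "of_int (lucasU P Q n) * (a - b) = a^n - b^n \<and>
         of_int (lucasU P Q (Suc n)) * (a - b) = a^(Suc n) - b^(Suc n)"
proof (induction n)
  case 0
  then show ?case by simp
next
  case (Suc n)
  have "of_int (lucasU P Q (Suc (Suc n))) * (a - b)
      = of_int P * (of_int (lucasU P Q (Suc n)) * (a - b)) - of_int Q * (of_int (lucasU P Q n) * (a - b))"
    by (simp add: algebra_simps)
  also have "\<dots> = (a+b) * (a^(Suc n) - b^(Suc n)) - (a*b) * (a^n - b^n)"
    using Suc assms by simp
  also have "\<dots> = a^(Suc (Suc n)) - b^(Suc (Suc n))" by (simp add: algebra_simps)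
  finally show ?case using Suc by simp
qed

lemma lucas_dvd_mult: "lucasU P Q m dvd lucasU P Q (m * j)"
proof (induction j)
  case 0
  then show ?case by simp
next
  case (Suc j)
  show ?case
  proof (cases m)
    case 0
    then show ?thesis by simp
  next
    case (Suc m')
    have "m * Suc j = m*j + m' + 1" using Suc by simp
    then have "lucasU P Q (m * Suc j) = lucasU P Q (m*j + m' + 1)" by (simp only:)
    also have "\<dots> = lucasU P Q (m*j+1) * lucasU P Q (m'+1) - Q * lucasU P Q (m*j) * lucasU P Q m'"
      by (rule lucas_add)
    finally show ?thesis using Suc.IH \<open>m = Suc m'\<close>
      by (simp del: lucasU.simps add: dvd_diff)
  qed
qed

lemma lucas_coprime_Q:
  assumes "coprime P Q"
  shows "coprime (lucasU P Q (Suc n)) Q"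
proof (induction n)
  case 0
  then show ?case by simp
next
  case (Suc n)
  have c: "coprime (P * lucasU P Q (Suc n)) Q" using Suc assms by simp
  have "coprime (P * lucasU P Q (Suc n) - Q * lucasU P Q n) Q"
  proof (rule coprimeI)
    fix d assume d1: "d dvd P * lucasU P Q (Suc n) - Q * lucasU P Q n" and d2: "d dvd Q"
    have "d dvd (P * lucasU P Q (Suc n) - Q * lucasU P Q n) + Q * lucasU P Q n"
      using d1 d2 by (intro dvd_add) auto
    then have "d dvd P * lucasU P Q (Suc n)" by simp
    then show "is_unit d" by (rule coprime_common_divisor[OF c _ d2])
  qed
  then show ?case by simp
qed


lemma lucas_coprime_consec:
  assumes "coprime P Q"
  shows "coprime (lucasU P Q n) (lucasU P Q (Suc n))"
proof (induction n)
  case 0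
  then show ?case by simp
next
  case (Suc n)
  have c1: "coprime (lucasU P Q (Suc n)) Q" by (rule lucas_coprime_Q[OF assms])
  have c2: "coprime (lucasU P Q (Suc n)) (lucasU P Q n)" using Suc by (simp add: coprime_commute)
  have "coprime (lucasU P Q (Suc n)) (P * lucasU P Q (Suc n) - Q * lucasU P Q n)"
  proof (rule coprimeI)
    fix d assume d1: "d dvd lucasU P Q (Suc n)" and d2: "d dvd P * lucasU P Q (Suc n) - Q * lucasU P Q n"
    have "d dvd P * lucasU P Q (Suc n) - (P * lucasU P Q (Suc n) - Q * lucasU P Q n)"
      by (rule dvd_diff[OF dvd_mult[OF d1] d2])
    moreover have "P * lucasU P Q (Suc n) - (P * lucasU P Q (Suc n) - Q * lucasU P Q n) = Q * lucasU P Q n"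
      by simp
    ultimately have "d dvd Q * lucasU P Q n" by (simp only:)
    moreover have "coprime (lucasU P Q (Suc n)) (Q * lucasU P Q n)" using c1 c2 by simp
    then have "coprime d (Q * lucasU P Q n)" by (rule coprime_divisors[OF d1 dvd_refl])
    ultimately show "is_unit d" by (metis coprime_common_divisor dvd_refl)
  qed
  then show ?case by simp
qed

lemma lucas_dvd_cancel:
  assumes "coprime P Q" "d dvd lucasU P Q (a + b)" "d dvd lucasU P Q b"
  shows "d dvd lucasU P Q a"
proof (cases a)
  case 0
  then show ?thesis by simp
next
  case (Suc a')
  have "lucasU P Q (a + b) = lucasU P Q (a'+b+1)" using Suc by simp
  also have "\<dots> = lucasU P Q (a'+1) * lucasU P Q (b+1) - Q * lucasU P Q a' * lucasU P Q b"
    by (rule lucas_add)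
  finally have e: "lucasU P Q (a + b) = lucasU P Q a * lucasU P Q (Suc b) - Q * lucasU P Q a' * lucasU P Q b"
    using Suc by simp
  have "d dvd lucasU P Q (a + b) + Q * lucasU P Q a' * lucasU P Q b"
    using assms by (intro dvd_add) auto
  then have "d dvd lucasU P Q a * lucasU P Q (Suc b)" using e by simp
  moreover have "coprime d (lucasU P Q (Suc b))"
    by (rule coprime_divisors[OF assms(3) dvd_refl lucas_coprime_consec[OF assms(1)]])
  ultimately show ?thesis using coprime_dvd_mult_left_iff by auto
qed

lemma lucas_dvd_gcd:
  assumes "coprime P Q" "d dvd lucasU P Q a" "d dvd lucasU P Q b"
  shows "d dvd lucasU P Q (gcd a b)"
  using assms(2,3)
proof (induction "a + b" arbitrary: a b rule: less_induct)
  case less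
  show ?case
  proof (cases "a = 0 \<or> b = 0")
    case True
    then show ?thesis using less.prems by auto
  next
    case False
    show ?thesis
    proof (cases "b \<le> a")
      case True
      have "d dvd lucasU P Q (a - b)"
        using lucas_dvd_cancel[OF assms(1), of d "a - b" b] less.prems True by simp
      then have "d dvd lucasU P Q (gcd (a - b) b)"
        using less.hyps[of "a - b" b] less.prems False True by simp
      moreover have "gcd (a - b) b = gcd a b" using True by (metis gcd_diff1_nat)
      ultimately show ?thesis by simp
    next
      case nb: False
      have "d dvd lucasU P Q (b - a)"
        using lucas_dvd_cancel[OF assms(1), of d "b - a" a] less.prems nb by simp
      then have "d dvd lucasU P Q (gcd a (b - a))"
        using less.hyps[of a "b - a"] less.prems False nb by simp
      moreover have "gcd a (b - a) = gcd a b" using nb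
        by (metis gcd.commute gcd_diff1_nat nat_le_linear)
      ultimately show ?thesis by simp
    qed
  qed
qed

lemma lucas_rank:
  assumes "coprime P Q"
  shows "\<exists>r. \<forall>m. d dvd lucasU P Q m \<longleftrightarrow> r dvd m"
proof (cases "\<exists>m>0. d dvd lucasU P Q m")
  case False
  show ?thesis
  proof (rule exI[of _ 0], intro allI iffI)
    fix m assume "d dvd lucasU P Q m" then show "0 dvd m" using False by auto
  next
    fix m :: nat assume "0 dvd m" then show "d dvd lucasU P Q m" by simp
  qed
next
  case True
  define r where "r = (LEAST m. m > 0 \<and> d dvd lucasU P Q m)"
  have r: "r > 0" "d dvd lucasU P Q r" using LeastI_ex[OF True] unfolding r_def by auto
  show ?thesis
  proof (rule exI[of _ r], intro allI iffI)
    fix m assume dm: "d dvd lucasU P Q m"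
    show "r dvd m"
    proof (cases "m = 0")
      case False
      have g: "d dvd lucasU P Q (gcd r m)" using lucas_dvd_gcd[OF assms r(2) dm] .
      have "gcd r m > 0" using r by simp
      then have "r \<le> gcd r m"
        using Least_le[of "\<lambda>m. m>0 \<and> d dvd lucasU P Q m" "gcd r m"] g unfolding r_def[symmetric] by auto
      moreover have "gcd r m \<le> r" using r by (simp add: gcd_le1_nat)
      ultimately have "gcd r m = r" by simp
      then show ?thesis by (metis gcd_dvd2)
    qed simp
  next
    fix m assume "r dvd m"
    then obtain j where "m = r * j" by blast
    then show "d dvd lucasU P Q m" using dvd_trans[OF r(2) lucas_dvd_mult] by simp
  qed
qed

lemma card_multiples:
  fixes r N :: nat assumes "r > 0"
  shows "card {i\<in>{1..N}. r dvd i} = N div r"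
proof (induction N)
  case 0
  then show ?case by simp
next
  case (Suc N)
  have eq: "{i\<in>{1..Suc N}. r dvd i} = {i\<in>{1..N}. r dvd i} \<union> (if r dvd Suc N then {Suc N} else {})"
    by (auto simp: le_Suc_eq)
  show ?case
  proof (cases "r dvd Suc N")
    case True
    then have "card {i\<in>{1..Suc N}. r dvd i} = Suc (card {i\<in>{1..N}. r dvd i})"
      unfolding eq by simp
    then show ?thesis using Suc True by (simp add: div_Suc dvd_eq_mod_eq_0)
  next
    case False
    then show ?thesis using Suc eq by (simp add: div_Suc dvd_eq_mod_eq_0)
  qed
qed

lemma count_window:
  fixes r n k :: nat assumes "k \<le> n"
  shows "card {i\<in>{1..k}. r dvd i} \<le> card {m\<in>{n-k+1..n}. r dvd m}"
proof (cases "r = 0")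
  case True
  then have "{i\<in>{1..k}. r dvd i} = {}" by auto
  then have "card {i\<in>{1..k}. r dvd i} = 0" by (metis card.empty)
  then show ?thesis by linarith
next
  case False
  have eq: "{m\<in>{n-k+1..n}. r dvd m} = {m\<in>{1..n}. r dvd m} - {m\<in>{1..n-k}. r dvd m}"
    by auto
  have "card {m\<in>{n-k+1..n}. r dvd m} = n div r - (n - k) div r"
  proof -
    have sub: "{m\<in>{1..n-k}. r dvd m} \<subseteq> {m\<in>{1..n}. r dvd m}" by auto
    have "card ({m\<in>{1..n}. r dvd m} - {m\<in>{1..n-k}. r dvd m})
        = card {m\<in>{1..n}. r dvd m} - card {m\<in>{1..n-k}. r dvd m}"
      by (rule card_Diff_subset[OF _ sub]) simp
    then show ?thesis unfolding eq card_multiples[OF \<open>r \<noteq> 0\<close>[unfolded neq0_conv]] .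
  qed
  moreover have "(n - k) div r + k div r \<le> n div r"
    using div_add1_eq[of "n-k" k r] assms by simp
  moreover have "card {i\<in>{1..k}. r dvd i} = k div r" using False by (intro card_multiples) simp
  ultimately show ?thesis by linarith
qed

lemma prime_power_dvd_lcm:
  fixes p a b :: int
  assumes "prime p" "a \<noteq> 0" "b \<noteq> 0"
  shows "p ^ e dvd lcm a b \<longleftrightarrow> p ^ e dvd a \<or> p ^ e dvd b"
proof -
  have u: "\<not> is_unit p" using assms(1) not_prime_unit by blast
  have l: "lcm a b \<noteq> 0" using assms by (simp add: lcm_eq_0_iff)
  show ?thesis
    unfolding power_dvd_iff_le_multiplicity[OF l u] power_dvd_iff_le_multiplicity[OF assms(2) u]
      power_dvd_iff_le_multiplicity[OF assms(3) u] multiplicity_lcm[OF assms(2,3,1)] by auto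
qed

lemma prime_power_dvd_Lcm:
  fixes p :: int
  assumes "prime p" "finite A" "0 \<notin> A" "e \<ge> 1"
  shows "p ^ e dvd Lcm A \<longleftrightarrow> (\<exists>a\<in>A. p ^ e dvd a)"
  using assms(2,3)
proof (induction A rule: finite_induct)
  case empty
  have "\<not> p ^ e dvd 1" using assms(1,4)
    by (metis is_unit_power_iff not_one_le_zero not_prime_unit)
  then show ?case by simp
next
  case (insert a A)
  have "Lcm A \<noteq> 0" using insert by (simp add: Lcm_0_iff)
  then show ?case using insert prime_power_dvd_lcm[OF assms(1), of a "Lcm A"] by auto
qed

lemma my_sum_bool:
  assumes "finite A"
  shows "(\<Sum>x\<in>A. (of_bool (P x) :: nat)) = card {x\<in>A. P x}"
proof -
  have "card {x\<in>A. P x} = (\<Sum>x\<in>{x\<in>A. P x}. (1::nat))" by simp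
  also have "\<dots> = (\<Sum>x\<in>A. if P x then 1 else 0)" by (rule sum.inter_filter[OF assms])
  finally show ?thesis by (simp add: of_bool_def)
qed

lemma mult_as_sum:
  fixes p x :: int
  assumes "prime p" "x \<noteq> 0" "multiplicity p x \<le> E"
  shows "multiplicity p x = (\<Sum>e\<in>{1..E}. of_bool (p ^ e dvd x))"
proof -
  have u: "\<not> is_unit p" using assms(1) not_prime_unit by blast
  have iff: "p ^ e dvd x \<longleftrightarrow> e \<le> multiplicity p x" for e
    by (rule power_dvd_iff_le_multiplicity[OF assms(2) u])
  have s: "{e\<in>{1..E}. p ^ e dvd x} = {1..multiplicity p x}"
    using assms(3) unfolding iff by auto
  show ?thesis unfolding my_sum_bool[OF finite_atLeastAtMost] s by simp
qed

lemma val_ineq: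
  fixes p :: int and f :: "nat \<Rightarrow> int" and S1 Sw :: "nat set"
  assumes p: "prime p" and fin: "finite S1" "finite Sw"
    and nz1: "\<forall>i\<in>S1. f i \<noteq> 0" and nzw: "\<forall>m\<in>Sw. f m \<noteq> 0"
    and cnt: "\<And>e. card {i\<in>S1. p^e dvd f i} \<le> card {m\<in>Sw. p^e dvd f m}"
  shows "multiplicity p (Lcm (f ` Sw) * prod f S1) \<le> multiplicity p (Lcm (f ` S1) * prod f Sw)"
proof -
  define W where "W = Lcm (f ` Sw)"
  define L where "L = Lcm (f ` S1)"
  have u: "\<not> is_unit p" using p not_prime_unit by blast
  have pe: "prime_elem p" using p by (rule prime_imp_prime_elem)
  have W0: "W \<noteq> 0" unfolding W_def using fin nzw by (auto simp: Lcm_0_iff)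
  have L0: "L \<noteq> 0" unfolding L_def using fin nz1 by (auto simp: Lcm_0_iff)
  have P1: "prod f S1 \<noteq> 0" using fin nz1 by simp
  have Pw: "prod f Sw \<noteq> 0" using fin nzw by simp
  define E where "E = multiplicity p W + multiplicity p L"
  define ind where "ind = (\<lambda>x e. of_bool (p ^ e dvd x) :: nat)"
  have vs: "multiplicity p x = (\<Sum>e\<in>{1..E}. ind x e)" if "x \<noteq> 0" "multiplicity p x \<le> E" for x
    unfolding ind_def using mult_as_sum[OF p that] .
  have WL: "W dvd W'" if "W' = W" for W' using that by simp
  have m1: "multiplicity p (f i) \<le> E" if "i \<in> S1" for i
  proof -
    have "f i dvd L" unfolding L_def using that by simp
    then have "multiplicity p (f i) \<le> multiplicity p L" using L0 by (rule dvd_imp_multiplicity_le)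
    then show ?thesis unfolding E_def by simp
  qed
  have mw: "multiplicity p (f m) \<le> E" if "m \<in> Sw" for m
  proof -
    have "f m dvd W" unfolding W_def using that by simp
    then have "multiplicity p (f m) \<le> multiplicity p W" using W0 by (rule dvd_imp_multiplicity_le)
    then show ?thesis unfolding E_def by simp
  qed
  have cs1: "(\<Sum>i\<in>S1. ind (f i) e) = card {i\<in>S1. p^e dvd f i}" for e
    unfolding ind_def by (rule my_sum_bool[OF fin(1)])
  have csw: "(\<Sum>m\<in>Sw. ind (f m) e) = card {m\<in>Sw. p^e dvd f m}" for e
    unfolding ind_def by (rule my_sum_bool[OF fin(2)])
  have indW: "ind W e = of_bool (card {m\<in>Sw. p^e dvd f m} > 0)" if "e \<ge> 1" for e
  proof -
    have "p ^ e dvd W \<longleftrightarrow> (\<exists>a\<in>f ` Sw. p ^ e dvd a)"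
      unfolding W_def
    proof (rule prime_power_dvd_Lcm[OF p _ _ that])
      show "finite (f ` Sw)" using fin by simp
      show "0 \<notin> f ` Sw" using nzw by auto
    qed
    also have "\<dots> \<longleftrightarrow> card {m\<in>Sw. p^e dvd f m} > 0" using fin by (auto simp: card_gt_0_iff)
    finally show ?thesis unfolding ind_def by simp
  qed
  have indL: "ind L e = of_bool (card {i\<in>S1. p^e dvd f i} > 0)" if "e \<ge> 1" for e
  proof -
    have "p ^ e dvd L \<longleftrightarrow> (\<exists>a\<in>f ` S1. p ^ e dvd a)"
      unfolding L_def
    proof (rule prime_power_dvd_Lcm[OF p _ _ that])
      show "finite (f ` S1)" using fin by simp
      show "0 \<notin> f ` S1" using nz1 by auto
    qed
    also have "\<dots> \<longleftrightarrow> card {i\<in>S1. p^e dvd f i} > 0" using fin by (auto simp: card_gt_0_iff)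
    finally show ?thesis unfolding ind_def by simp
  qed
  have "multiplicity p (W * prod f S1) = multiplicity p W + (\<Sum>i\<in>S1. multiplicity p (f i))"
  proof -
    have "0 \<notin> f ` S1" using nz1 by auto
    then show ?thesis
      using prime_elem_multiplicity_mult_distrib[OF pe W0 P1] prime_elem_multiplicity_prod_distrib[OF pe _ fin(1)]
      by simp
  qed
  also have "\<dots> = (\<Sum>e\<in>{1..E}. ind W e) + (\<Sum>i\<in>S1. \<Sum>e\<in>{1..E}. ind (f i) e)"
  proof -
    have "multiplicity p W \<le> E" unfolding E_def by simp
    then have a: "multiplicity p W = (\<Sum>e\<in>{1..E}. ind W e)" by (rule vs[OF W0])
    have b: "(\<Sum>i\<in>S1. multiplicity p (f i)) = (\<Sum>i\<in>S1. \<Sum>e\<in>{1..E}. ind (f i) e)"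
      by (intro sum.cong refl vs) (use m1 nz1 in auto)
    show ?thesis unfolding a b ..
  qed
  also have "\<dots> = (\<Sum>e\<in>{1..E}. ind W e + card {i\<in>S1. p^e dvd f i})"
  proof -
    have "(\<Sum>i\<in>S1. \<Sum>e\<in>{1..E}. ind (f i) e) = (\<Sum>e\<in>{1..E}. \<Sum>i\<in>S1. ind (f i) e)"
      by (rule sum.swap)
    then show ?thesis unfolding cs1 by (simp add: sum.distrib)
  qed
  also have "\<dots> \<le> (\<Sum>e\<in>{1..E}. ind L e + card {m\<in>Sw. p^e dvd f m})"
  proof (rule sum_mono)
    fix e assume "e \<in> {1..E}"
    then have e1: "e \<ge> 1" by simp
    show "ind W e + card {i\<in>S1. p^e dvd f i} \<le> ind L e + card {m\<in>Sw. p^e dvd f m}"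
      unfolding indW[OF e1] indL[OF e1] using cnt[of e] by auto
  qed
  also have "\<dots> = (\<Sum>e\<in>{1..E}. ind L e) + (\<Sum>m\<in>Sw. \<Sum>e\<in>{1..E}. ind (f m) e)"
  proof -
    have "(\<Sum>i\<in>Sw. \<Sum>e\<in>{1..E}. ind (f i) e) = (\<Sum>e\<in>{1..E}. \<Sum>i\<in>Sw. ind (f i) e)"
      by (rule sum.swap)
    then show ?thesis unfolding csw by (simp add: sum.distrib)
  qed
  also have "\<dots> = multiplicity p L + (\<Sum>m\<in>Sw. multiplicity p (f m))"
  proof -
    have "multiplicity p L \<le> E" unfolding E_def by simp
    then have a: "multiplicity p L = (\<Sum>e\<in>{1..E}. ind L e)" by (rule vs[OF L0])
    have b: "(\<Sum>i\<in>Sw. multiplicity p (f i)) = (\<Sum>i\<in>Sw. \<Sum>e\<in>{1..E}. ind (f i) e)"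
      by (intro sum.cong refl vs) (use mw nzw in auto)
    show ?thesis unfolding a b ..
  qed
  also have "\<dots> = multiplicity p (L * prod f Sw)"
  proof -
    have "0 \<notin> f ` Sw" using nzw by auto
    then show ?thesis
      using prime_elem_multiplicity_mult_distrib[OF pe L0 Pw] prime_elem_multiplicity_prod_distrib[OF pe _ fin(2)]
      by simp
  qed
  finally show ?thesis unfolding W_def L_def .
qed

theorem theorem8:
  fixes P Q :: int and \<alpha> \<beta> :: complex and n k :: nat
  assumes "P \<noteq> 0" and "Q \<noteq> 0" and "coprime P Q"
    and "P^2 - 4*Q \<noteq> 0"
    and "\<alpha> + \<beta> = of_int P" and "\<alpha> * \<beta> = of_int Q"
    and "\<not> (\<exists>m::nat. m > 0 \<and> (\<alpha> / \<beta>) ^ m = 1)"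
    and "k \<ge> 1" and "n \<ge> k"
  shows "\<exists>c::int. c > 0 \<and> lucas_lcm_binom P Q n k = of_int c
           \<and> (\<exists>d::int. lucas_binom P Q n k = of_int (c * d))"
proof -
  let ?u = "lucasU P Q"
  have ab: "\<alpha> \<noteq> \<beta>"
  proof
    assume "\<alpha> = \<beta>"
    have "(of_int (P^2 - 4*Q) :: complex) = (\<alpha> + \<beta>)^2 - 4 * (\<alpha> * \<beta>)"
      unfolding assms(5,6) by simp
    also have "\<dots> = (\<alpha> - \<beta>)^2" by (simp add: power2_eq_square algebra_simps)
    also have "\<dots> = 0" using \<open>\<alpha> = \<beta>\<close> by simp
    finally show False using assms(4) by (simp only: of_int_eq_0_iff)
  qed
  have b0: "\<beta> \<noteq> 0" using assms(2,6) by auto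
  have nz: "?u m \<noteq> 0" if "m \<ge> 1" for m
  proof
    assume h: "?u m = 0"
    have "of_int (?u m) * (\<alpha> - \<beta>) = \<alpha>^m - \<beta>^m"
      using lucas_binet_pair[OF assms(5,6)] by blast
    then have "\<alpha>^m = \<beta>^m" using h by simp
    then have "(\<alpha>/\<beta>)^m = 1" using b0 by (simp add: power_divide)
    then show False using assms(7) that by (metis One_nat_def not_less_eq_eq neq0_conv le0)
  qed
  define S1 where "S1 = {1..k}"
  define Sw where "Sw = {n-k+1..n}"
  have fin: "finite S1" "finite Sw" unfolding S1_def Sw_def by auto
  have nz1: "\<forall>i\<in>S1. ?u i \<noteq> 0" unfolding S1_def using nz by auto
  have nzw: "\<forall>i\<in>Sw. ?u i \<noteq> 0" unfolding Sw_def using nz by auto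
  have cnt: "card {i\<in>S1. d dvd ?u i} \<le> card {m\<in>Sw. d dvd ?u m}" for d
  proof -
    obtain r where r: "\<And>m. d dvd ?u m \<longleftrightarrow> r dvd m" using lucas_rank[OF assms(3)] by blast
    show ?thesis unfolding r S1_def Sw_def using count_window[OF assms(9)] by simp
  qed
  define W where "W = Lcm (?u ` Sw)"
  define L where "L = Lcm (?u ` S1)"
  have W0: "W \<noteq> 0" unfolding W_def using fin nzw by (auto simp: Lcm_0_iff)
  have L0: "L \<noteq> 0" unfolding L_def using fin nz1 by (auto simp: Lcm_0_iff)
  have Wp: "W > 0" using W0 Lcm_int_greater_eq_0[of "?u ` Sw"] unfolding W_def by linarith
  have Lp: "L > 0" using L0 Lcm_int_greater_eq_0[of "?u ` S1"] unfolding L_def by linarith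
  have LW: "L dvd W"
  proof (rule multiplicity_le_imp_dvd[OF L0])
    fix p :: int assume p: "prime p"
    have u: "\<not> is_unit p" using p not_prime_unit by blast
    show "multiplicity p L \<le> multiplicity p W"
    proof (cases "multiplicity p L = 0")
      case False
      define e where "e = multiplicity p L"
      have e1: "e \<ge> 1" using False unfolding e_def by simp
      have "p ^ e dvd L" unfolding e_def by (rule multiplicity_dvd)
      then have "\<exists>a\<in>?u ` S1. p ^ e dvd a" unfolding L_def
        using prime_power_dvd_Lcm[OF p _ _ e1, of "?u ` S1"] fin nz1 by force
      then have "card {i\<in>S1. p^e dvd ?u i} > 0" using fin by (auto simp: card_gt_0_iff)
      then have "card {m\<in>Sw. p^e dvd ?u m} > 0" using cnt[of "p^e"] by linarith
      then obtain m where m: "m \<in> Sw" "p^e dvd ?u m" using fin by (auto simp: card_gt_0_iff)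
      have "?u m dvd W" unfolding W_def using m(1) by simp
      then have "p ^ e dvd W" using m(2) by (rule dvd_trans[rotated])
      then show ?thesis unfolding e_def[symmetric] using power_dvd_iff_le_multiplicity[OF W0 u] by simp
    qed simp
  qed
  have P1: "prod ?u S1 \<noteq> 0" using fin nz1 by simp
  have main: "W * prod ?u S1 dvd L * prod ?u Sw"
  proof (rule multiplicity_le_imp_dvd)
    show "W * prod ?u S1 \<noteq> 0" using W0 P1 by simp
    fix p :: int assume p: "prime p"
    show "multiplicity p (W * prod ?u S1) \<le> multiplicity p (L * prod ?u Sw)"
      unfolding W_def L_def by (rule val_ineq[OF p fin nz1 nzw cnt])
  qed
  obtain c where c: "W = L * c" using LW by blast
  have cp: "c > 0" using Wp Lp c by (simp add: zero_less_mult_iff)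
  obtain d where d: "L * prod ?u Sw = W * prod ?u S1 * d" using main by blast
  have "L * prod ?u Sw = L * (c * prod ?u S1 * d)" using d c by (simp add: algebra_simps)
  then have pw: "prod ?u Sw = c * d * prod ?u S1" using L0 by (simp add: algebra_simps)
  have "lucas_lcm_binom P Q n k = of_int c"
    unfolding lucas_lcm_binom_def W_def[symmetric, unfolded Sw_def] L_def[symmetric, unfolded S1_def]
    using c L0 by simp
  moreover have "lucas_binom P Q n k = of_int (c * d)"
  proof -
    have "lucas_binom P Q n k = of_int (prod ?u Sw) / of_int (prod ?u S1)"
      unfolding lucas_binom_def Sw_def S1_def by simp
    also have "\<dots> = of_int (c * d)"
    proof -
      have g: "\<And>X::int. X \<noteq> 0 \<Longrightarrow> (of_int (c*d*X)::rat) / of_int X = of_int (c*d)" by simp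
      show ?thesis unfolding pw by (rule g[OF P1])
    qed
    finally show ?thesis .
  qed
  ultimately show ?thesis using cp by blast
qed

end
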